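(* There is a weight-preserving bijection from $\mathcal{P}3_{o}$ to $\mathcal{D}_{o}\times\mathcal{D}_{4,2}$.
   Context: A partition of $n$ is a non-increasing finite sequence of positive integers (parts) summing to $n$; its weight is the sum of its parts. $\mathcal{P}3_{o}$ denotes the set of partitions into odd parts in which each part size occurs at most $3$ times. $\mathcal{D}_{o}$ denotes the set of partitions into distinct odd parts. $\mathcal{D}_{4,2}$ denotes the set of partitions into distinct parts congruent to $2$ modulo $4$. The weight of a pair of partitions is the sum of the weights of its components; a bijection is weight-preserving if each object and its image have the same weight. *)

theory Defs
  imports Main
begin

definition is_partition :: "nat list \<Rightarrow> bool" where
  "is_partition xs \<longleftrightarrow> sorted_wrt (\<ge>) xs \<and> (\<forall>x\<in>set xs. 0 < x)"

definition weight :: "nat list \<Rightarrow> nat" where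
  "weight xs = sum_list xs"

definition P3o :: "nat list set" where
  "P3o = {xs. is_partition xs \<and> (\<forall>x\<in>set xs. odd x) \<and> (\<forall>x. count_list xs x \<le> 3)}"

definition Do :: "nat list set" where
  "Do = {xs. is_partition xs \<and> distinct xs \<and> (\<forall>x\<in>set xs. odd x)}"

definition D42 :: "nat list set" where
  "D42 = {xs. is_partition xs \<and> distinct xs \<and> (\<forall>x\<in>set xs. x mod 4 = 2)}"

end

theory Submission imports Defs "HOL-Library.Multiset" begin

lemma part_rev_sort: "is_partition (rev (sort l)) \<longleftrightarrow> 0 \<notin> set l"
proof -
  have "sorted_wrt (\<ge>) (rev (sort l))" 
    using sorted_sort[of l] by (simp add: sorted_wrt_rev)
  then show ?thesis unfolding is_partition_def by (auto intro: Nat.gr0I)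
qed

lemma part_eq:
  assumes "is_partition a" "is_partition b" "mset a = mset b" shows "a = b"
proof -
  have "sorted (rev a)" "sorted (rev b)" using assms(1,2) unfolding is_partition_def
    by (simp_all add: sorted_wrt_rev)
  moreover have "mset (rev a) = mset (rev b)" using assms(3) by simp
  ultimately have "rev a = rev b" using properties_for_sort by metis
  then show ?thesis by simp
qed

lemma count_distinct: "distinct l \<Longrightarrow> count (mset l) x = (if x \<in> set l then 1 else 0)"
  using distinct_count_atmost_1 by metis

lemma count_remdups_filter: "count_list (filter P (remdups xs)) x = (if P x \<and> x \<in> set xs then 1 else 0)"
  by (subst count_mset[symmetric], subst count_distinct) auto

lemma sum_rev_sort: "sum_list (rev (sort l)) = sum_list (l::nat list)"
  by (metis mset_rev mset_sort sum_mset_sum_list)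

lemma odd2: "odd (x::nat) \<Longrightarrow> 2*x mod 4 = 2" by presburger

lemma sum_sort: "sum_list (sort l) = sum_list (l::nat list)"
  by (metis mset_sort sum_mset_sum_list)

definition F1 :: "nat list \<Rightarrow> nat list" where
  "F1 xs = filter (\<lambda>x. odd (count_list xs x)) (remdups xs)"
definition F2 :: "nat list \<Rightarrow> nat list" where
  "F2 xs = filter (\<lambda>x. 2 \<le> count_list xs x) (remdups xs)"
definition ff :: "nat list \<Rightarrow> nat list \<times> nat list" where
  "ff xs = (rev (sort (F1 xs)), rev (sort (map (\<lambda>x. 2*x) (F2 xs))))"
definition gg :: "nat list \<times> nat list \<Rightarrow> nat list" where
  "gg p = (let hs = map (\<lambda>z. z div 2) (snd p) in rev (sort (fst p @ hs @ hs)))"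

lemma ff_mset:
  assumes "xs \<in> P3o"
  shows "mset xs = mset (F1 xs) + mset (F2 xs) + mset (F2 xs)"
proof (rule multiset_eqI)
  fix x
  have c: "count_list xs x \<le> 3" using assms by (simp add: P3o_def)
  have s: "x \<in> set xs \<longleftrightarrow> count_list xs x \<noteq> 0" by (simp add: count_list_0_iff)
  show "count (mset xs) x = count (mset (F1 xs) + mset (F2 xs) + mset (F2 xs)) x"
    unfolding F1_def F2_def using c s
    by (simp only: count_union count_mset count_remdups_filter) (cases "count_list xs x"; auto; presburger)
qed

lemma ff_in: assumes "xs \<in> P3o" shows "ff xs \<in> Do \<times> D42"
proof -
  have p: "0 \<notin> set xs" "\<forall>x\<in>set xs. odd x" using assms by (auto simp: P3o_def is_partition_def)
  have d1: "distinct (F1 xs)" "distinct (map (\<lambda>x. 2*x) (F2 xs))"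
    by (auto simp: F1_def F2_def distinct_map inj_on_def)
  show ?thesis unfolding ff_def Do_def D42_def using p d1
    by (auto simp: part_rev_sort F1_def F2_def odd2)
qed

lemma gg_ff: assumes "xs \<in> P3o" shows "gg (ff xs) = xs"
proof (rule part_eq)
  have p: "0 \<notin> set xs" using assms by (auto simp: P3o_def is_partition_def)
  have "map (\<lambda>z. z div 2) (map (\<lambda>x. 2*x) (F2 xs)) = F2 xs" by (simp add: map_idI)
  then have "mset (gg (ff xs)) = mset (F1 xs) + mset (F2 xs) + mset (F2 xs)"
    by (simp add: gg_def ff_def Let_def multiset.map_comp comp_def)
  then show "mset (gg (ff xs)) = mset xs" using ff_mset[OF assms] by simp
  show "is_partition xs" using assms by (simp add: P3o_def)
  show "is_partition (gg (ff xs))" unfolding gg_def ff_def Let_def part_rev_sort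
    using p by (auto simp: F1_def F2_def)
qed

lemma weight_ff: assumes "xs \<in> P3o" shows "weight (fst (ff xs)) + weight (snd (ff xs)) = weight xs"
proof -
  have "weight xs = sum_mset (mset xs)" by (simp add: weight_def sum_mset_sum_list)
  also have "\<dots> = sum_list (F1 xs) + sum_list (F2 xs) + sum_list (F2 xs)"
    using ff_mset[OF assms] by (simp add: sum_mset_sum_list)
  also have "\<dots> = weight (fst (ff xs)) + weight (snd (ff xs))"
    by (simp add: ff_def weight_def sum_rev_sort sum_sort sum_list_const_mult)
  finally show ?thesis by simp
qed

lemma ar1: "z mod 4 = (2::nat) \<Longrightarrow> 2*(z div 2) = z" by presburger
lemma ar2: "z mod 4 = (2::nat) \<Longrightarrow> odd (z div 2)" by presburger
lemma ar3: "z mod 4 = (2::nat) \<Longrightarrow> 0 < z div 2" by presburger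

lemma gg_props:
  assumes "ys \<in> Do" "zs \<in> D42"
  defines "hs \<equiv> map (\<lambda>z. z div 2) zs"
  shows "distinct hs" "\<And>x. x \<in> set hs \<longleftrightarrow> 2*x \<in> set zs" "zs = map (\<lambda>x. 2*x) hs"
    "\<forall>x\<in>set hs. odd x \<and> 0 < x"
    "\<And>x. count_list (gg (ys,zs)) x = count_list ys x + 2 * count_list hs x"
proof -
  have z: "\<forall>z\<in>set zs. z mod 4 = 2" "distinct zs" using assms(2) by (auto simp: D42_def)
  have y: "distinct ys" using assms(1) by (auto simp: Do_def)
  have inj: "inj_on (\<lambda>z. z div 2) (set zs)"
    using z(1) unfolding inj_on_def by (metis ar1)
  show "distinct hs" unfolding hs_def using inj z(2) by (simp add: distinct_map)
  show "\<And>x. x \<in> set hs \<longleftrightarrow> 2*x \<in> set zs"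
  proof -
    fix x
    have "\<And>z. z \<in> set zs \<Longrightarrow> (z div 2 = x) = (z = 2*x)" using z(1) ar1 by (metis mult_2 nonzero_mult_div_cancel_left zero_neq_numeral)
    then show "x \<in> set hs \<longleftrightarrow> 2*x \<in> set zs" unfolding hs_def by force
  qed
  show "zs = map (\<lambda>x. 2*x) hs"
  proof -
    have "\<And>z. z \<in> set zs \<Longrightarrow> 2 * (z div 2) = z" using z(1) ar1 by blast
    then show ?thesis by (simp add: hs_def map_idI)
  qed
  show "\<forall>x\<in>set hs. odd x \<and> 0 < x" unfolding hs_def using z(1) ar2 ar3 by auto
  show "\<And>x. count_list (gg (ys,zs)) x = count_list ys x + 2 * count_list hs x"
    unfolding gg_def hs_def Let_def by (simp flip: count_mset)
qed


lemma gg_in: assumes "p \<in> Do \<times> D42" shows "gg p \<in> P3o"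
proof -
  obtain ys zs where p: "p = (ys, zs)" "ys \<in> Do" "zs \<in> D42" using assms by auto
  define hs where "hs = map (\<lambda>z. z div 2) zs"
  note G = gg_props[OF p(2,3), folded hs_def]
  have y: "distinct ys" "\<forall>x\<in>set ys. odd x \<and> 0 < x" using p(2) by (auto simp: Do_def is_partition_def)
  have "is_partition (gg p)" unfolding p(1) gg_def Let_def part_rev_sort
    using y G(4) by (auto simp: hs_def)
  moreover have "\<forall>x\<in>set (gg p). odd x" unfolding p(1) gg_def Let_def
    using y G(4) by (auto simp: hs_def)
  moreover have "count_list (gg p) x \<le> 3" for x
  proof -
    have "count_list ys x \<le> 1" "count_list hs x \<le> 1"
      using y(1) G(1) by (simp_all flip: count_mset add: count_distinct)
    then show ?thesis unfolding p(1) G(5) by simp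
  qed
  ultimately show ?thesis by (simp add: P3o_def)
qed

lemma ff_gg: assumes "p \<in> Do \<times> D42" shows "ff (gg p) = p"
proof -
  obtain ys zs where p: "p = (ys, zs)" "ys \<in> Do" "zs \<in> D42" using assms by auto
  define hs where "hs = map (\<lambda>z. z div 2) zs"
  note G = gg_props[OF p(2,3), folded hs_def]
  define xs where "xs = gg (ys, zs)"
  have y: "distinct ys" "\<forall>x\<in>set ys. odd x \<and> 0 < x" "is_partition ys" using p(2) by (auto simp: Do_def is_partition_def)
  have zp: "is_partition zs" using p(3) by (auto simp: D42_def)
  have cy: "count_list ys x = (if x \<in> set ys then 1 else 0)" for x
    using y(1) by (simp flip: count_mset add: count_distinct)
  have ch: "count_list hs x = (if 2*x \<in> set zs then 1 else 0)" for x
    using G(1,2) by (simp flip: count_mset add: count_distinct)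
  have c: "count_list xs x = (if x \<in> set ys then 1 else 0) + 2 * (if 2*x \<in> set zs then 1 else 0)" for x
    unfolding xs_def G(5) cy ch by simp
  have xin: "x \<in> set xs \<longleftrightarrow> count_list xs x \<noteq> 0" for x by (simp add: count_list_0_iff)
  have c1: "count_list (F1 xs) x = count_list ys x" for x
    unfolding F1_def count_remdups_filter cy using c[of x] xin[of x] by auto
  have c2: "count_list (F2 xs) x = count_list hs x" for x
    unfolding F2_def count_remdups_filter ch using c[of x] xin[of x] by auto
  have m1: "mset (F1 xs) = mset ys" by (rule multiset_eqI) (simp add: c1 count_mset)
  have m2: "mset (F2 xs) = mset hs" by (rule multiset_eqI) (simp add: c2 count_mset)
  have "fst (ff xs) = ys"
  proof (rule part_eq[OF _ y(3)])
    show "is_partition (fst (ff xs))" unfolding ff_def fst_conv part_rev_sort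
    proof -
      have "set (F1 xs) = set ys" using m1 by (metis set_mset_mset)
      then show "0 \<notin> set (F1 xs)" using y(2) by auto
    qed
    show "mset (fst (ff xs)) = mset ys" by (simp add: ff_def m1)
  qed
  moreover have "snd (ff xs) = zs"
  proof (rule part_eq[OF _ zp])
    have "mset (snd (ff xs)) = image_mset (\<lambda>x. 2*x) (mset hs)" by (simp add: ff_def m2)
    also have "\<dots> = mset zs" by (subst G(3)) simp
    finally show m: "mset (snd (ff xs)) = mset zs" .
    have "0 \<notin> set zs" using zp by (auto simp: is_partition_def)
    then have "0 \<notin> set (snd (ff xs))" using m by (metis set_mset_mset)
    then show "is_partition (snd (ff xs))" unfolding ff_def snd_conv part_rev_sort by simp
  qed
  ultimately show ?thesis unfolding p(1) xs_def[symmetric] by (simp add: prod_eq_iff)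
qed

theorem lemma2p7:
  shows "\<exists>f. bij_betw f P3o (Do \<times> D42) \<and>
             (\<forall>xs\<in>P3o. weight (fst (f xs)) + weight (snd (f xs)) = weight xs)"
proof (intro exI conjI ballI)
  show "bij_betw ff P3o (Do \<times> D42)"
  proof (rule bij_betw_byWitness[where f'=gg])
    show "\<forall>a\<in>P3o. gg (ff a) = a" by (intro ballI gg_ff)
    show "\<forall>a'\<in>Do \<times> D42. ff (gg a') = a'" by (intro ballI ff_gg)
    show "ff ` P3o \<subseteq> Do \<times> D42" by (rule image_subsetI) (rule ff_in)
    show "gg ` (Do \<times> D42) \<subseteq> P3o" by (rule image_subsetI) (rule gg_in)
  qed
  show "weight (fst (ff xs)) + weight (snd (ff xs)) = weight xs" if "xs \<in> P3o" for xs
    using weight_ff[OF that] .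
qed

end
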